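(* Consider the single-hop VAoI system described in the context, operated under the randomized stationary policy with transmission probability $\alpha\in(0,1]$. Then the steady-state probability $\mu_n$ that the VAoI equals $n$ is \[ \mu_n=\begin{cases}\dfrac{\alpha p_s(1-p_g)}{\beta}, & n=0,\\[2mm] \dfrac{\alpha p_s p_g}{\beta^2}, & n=1,\\[2mm] \left[\dfrac{(1-\alpha p_s)p_g}{\beta}\right]^{n-1}\mu_1, & n\ge 2,\end{cases} \] where $\beta=1-(1-\alpha p_s)(1-p_g)$.
   Context: Time is slotted, $t\in\{0,1,2,\dots\}$. An information source generates a new version in each slot independently with probability $p_g$; let $G_t\in\{0,1\}$ indicate whether a new version is generated in slot $t$, so the source version index satisfies $V_S(t+1)=V_S(t)+G_t$. A transmitter always holding the current source version may, in each slot $t$, attempt to send it to a receiver over an erasure channel; $a(t)\in\{0,1\}$ indicates an attempt, and each attempt succeeds independently with probability $p_s$. The Version Age of Information (VAoI) at the receiver is $\Delta(t)=V_S(t)-V_R(t)$, where $V_R(t)$ is the version index stored at the receiver; it evolves as $\Delta(t+1)=G_t$ if $a(t)=1$ and the attempt succeeds, and $\Delta(t+1)=\Delta(t)+G_t$ otherwise. All version-generation and channel events are mutually independent. Assume $0<p_s<1$ and $0<p_g<1$. Under the randomized stationary policy with transmission probability $\alpha$, the actions $a(t)$ are i.i.d. Bernoulli$(\alpha)$, independent of everything else; then $\Delta(t)$ is an ergodic Markov chain on $\{0,1,2,\dots\}$ and $\mu_n$ denotes its stationary probability of state $n$. *)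

theory Defs
  imports "HOL-Probability.Probability_Mass_Function"
begin

text \<open>One-slot transition of the VAoI chain under the randomized stationary policy:
  from VAoI value m, draw the action a ~ Bernoulli(alpha), the channel outcome
  s ~ Bernoulli(p_s) and the generation indicator G ~ Bernoulli(p_g), all independent;
  the next VAoI is G if a = 1 and the attempt succeeds, and m + G otherwise.\<close>
definition vaoi_step :: "real \<Rightarrow> real \<Rightarrow> real \<Rightarrow> nat \<Rightarrow> nat pmf" where
  "vaoi_step \<alpha> ps pg m =
     bind_pmf (bernoulli_pmf \<alpha>) (\<lambda>a.
     bind_pmf (bernoulli_pmf ps) (\<lambda>s.
     bind_pmf (bernoulli_pmf pg) (\<lambda>g.
       return_pmf (if a \<and> s then (if g then 1 else 0) else m + (if g then 1 else 0)))))"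

definition vaoi_stationary :: "real \<Rightarrow> real \<Rightarrow> real \<Rightarrow> nat pmf \<Rightarrow> bool" where
  "vaoi_stationary \<alpha> ps pg \<mu> \<longleftrightarrow> bind_pmf \<mu> (vaoi_step \<alpha> ps pg) = \<mu>"

end

theory Submission imports Defs begin
lemma step_pmf:
  assumes "0 \<le> a" "a \<le> 1" "0 \<le> ps" "ps \<le> 1" "0 \<le> pg" "pg \<le> 1"
  shows "pmf (vaoi_step a ps pg m) n =
    a*ps*(if n = 0 then 1 - pg else if n = 1 then pg else 0)
    + (1 - a*ps) * ((1-pg) * indicator {n} m + pg * indicator {k. Suc k = n} m)"
  using assms unfolding vaoi_step_def
  by (simp add: pmf_bind indicator_def algebra_simps split: split_indicator)

lemma bind_pmf_eq:
  assumes "0 \<le> a" "a \<le> 1" "0 \<le> ps" "ps \<le> 1" "0 \<le> pg" "pg \<le> 1"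
  shows "pmf (bind_pmf \<mu> (vaoi_step a ps pg)) n =
    a*ps*(if n = 0 then 1 - pg else if n = 1 then pg else 0)
    + (1 - a*ps) * ((1-pg) * pmf \<mu> n + pg * (if n = 0 then 0 else pmf \<mu> (n - 1)))"
proof -
  have e: "{k. Suc k = n} = (if n = 0 then {} else {n - 1})" by auto
  have "pmf (bind_pmf \<mu> (vaoi_step a ps pg)) n = (\<integral>m. 
    a*ps*(if n = 0 then 1 - pg else if n = 1 then pg else 0)
    + ((1 - a*ps) * (1-pg)) * indicator {n} m + ((1 - a*ps) * pg) * indicator {k. Suc k = n} m \<partial>measure_pmf \<mu>)"
    unfolding pmf_bind using assms by (simp add: step_pmf algebra_simps)
  also have "\<dots> = a*ps*(if n = 0 then 1 - pg else if n = 1 then pg else 0)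
    + ((1 - a*ps) * (1-pg)) * measure \<mu> {n} + ((1 - a*ps) * pg) * measure \<mu> {k. Suc k = n}"
    by (subst Bochner_Integration.integral_add; (subst Bochner_Integration.integral_add)?; simp add: measure_pmf.integrable_const_bound[where B=1])
  finally show ?thesis by (cases n) (simp_all add: measure_pmf_single algebra_simps)
qed

theorem proposition1:
  fixes \<alpha> ps pg :: real and \<mu> :: "nat pmf"
  assumes "0 < ps" "ps < 1" "0 < pg" "pg < 1" "0 < \<alpha>" "\<alpha> \<le> 1"
  defines "\<beta> \<equiv> 1 - (1 - \<alpha> * ps) * (1 - pg)"
  shows "vaoi_stationary \<alpha> ps pg \<mu> \<longleftrightarrow>
    (\<forall>n. pmf \<mu> n =
       (if n = 0 then \<alpha> * ps * (1 - pg) / \<beta>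
        else if n = 1 then \<alpha> * ps * pg / \<beta>^2
        else ((1 - \<alpha> * ps) * pg / \<beta>) ^ (n - 1) * (\<alpha> * ps * pg / \<beta>^2)))"
proof -
  define q where "q = \<alpha> * ps"
  have q0: "0 < q" unfolding q_def using assms by simp
  have "\<alpha> * ps \<le> 1 * ps" using assms by (intro mult_right_mono) auto
  hence q1: "q < 1" unfolding q_def using assms by linarith
  have bq: "\<beta> = 1 - (1 - q) * (1 - pg)" unfolding \<beta>_def q_def ..
  have "(1 - q) * (1 - pg) \<le> (1 - q)" using q0 q1 assms by (intro mult_left_le) auto
  hence "(1 - q) * (1 - pg) < 1" using q0 by linarith
  hence bpos: "\<beta> > 0" using bq by simp
  define r where "r = (1 - q) * pg / \<beta>"
  define B where "B = q * pg / \<beta>^2"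
  define T where "T n = (if n = 0 then q * (1 - pg) / \<beta> else r ^ (n - 1) * B)" for n
  have goalT: "(if n = 0 then \<alpha> * ps * (1 - pg) / \<beta>
        else if n = 1 then \<alpha> * ps * pg / \<beta>^2
        else ((1 - \<alpha> * ps) * pg / \<beta>) ^ (n - 1) * (\<alpha> * ps * pg / \<beta>^2)) = T n" for n
    unfolding T_def r_def B_def q_def by simp
  have BE: "pmf (bind_pmf \<nu> (vaoi_step \<alpha> ps pg)) n =
    q*(if n = 0 then 1 - pg else if n = 1 then pg else 0)
    + (1 - q) * ((1-pg) * pmf \<nu> n + pg * (if n = 0 then 0 else pmf \<nu> (n - 1)))" for \<nu> n
    unfolding q_def by (rule bind_pmf_eq) (use assms in auto)
  have rb: "r * \<beta> = (1 - q) * pg" unfolding r_def using bpos by simp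
  show ?thesis unfolding goalT vaoi_stationary_def
  proof
    assume st: "bind_pmf \<mu> (vaoi_step \<alpha> ps pg) = \<mu>"
    have eq: "pmf \<mu> n = q*(if n = 0 then 1 - pg else if n = 1 then pg else 0)
    + (1 - q) * ((1-pg) * pmf \<mu> n + pg * (if n = 0 then 0 else pmf \<mu> (n - 1)))" for n
      using BE[of \<mu> n] st by simp
    have e0': "pmf \<mu> 0 = q * (1 - pg) / \<beta>"
    proof -
      have "\<beta> * pmf \<mu> 0 = q * (1 - pg)" using eq[of 0] unfolding bq by (simp add: algebra_simps)
      thus ?thesis using bpos by (simp add: field_simps)
    qed
    hence e0: "pmf \<mu> 0 = T 0" unfolding T_def by simp
    have e1: "pmf \<mu> 1 = T 1"
    proof -
      have "\<beta> * pmf \<mu> 1 = q * pg + (1 - q) * pg * pmf \<mu> 0" using eq[of 1] unfolding bq by (simp add: algebra_simps)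
      hence "\<beta> * pmf \<mu> 1 = q * pg + (1 - q) * pg * (q * (1 - pg) / \<beta>)" using e0' by simp
      hence "pmf \<mu> 1 = (q * pg + (1 - q) * pg * (q * (1 - pg) / \<beta>)) / \<beta>" using bpos
        by (simp add: field_simps)
      also have "\<dots> = q * pg / \<beta>^2" using bpos by (simp add: field_simps power2_eq_square; (unfold bq)?; algebra)
      finally show ?thesis unfolding T_def B_def by simp
    qed
    have es: "pmf \<mu> (Suc (Suc k)) = T (Suc (Suc k))" for k
    proof (induction k)
      case 0
      have "\<beta> * pmf \<mu> 2 = (1 - q) * pg * pmf \<mu> 1" using eq[of 2] unfolding bq by (simp add: algebra_simps)
      hence "pmf \<mu> 2 = r * T 1" using e1 bpos unfolding r_def by (simp add: field_simps)
      thus ?case unfolding T_def by (simp add: numeral_2_eq_2)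
    next
      case (Suc k)
      have "\<beta> * pmf \<mu> (Suc (Suc (Suc k))) = (1 - q) * pg * pmf \<mu> (Suc (Suc k))"
        using eq[of "Suc (Suc (Suc k))"] unfolding bq by (simp add: algebra_simps)
      hence "pmf \<mu> (Suc (Suc (Suc k))) = r * T (Suc (Suc k))" using Suc bpos unfolding r_def
        by (simp add: field_simps)
      thus ?case unfolding T_def by simp
    qed
    show "\<forall>n. pmf \<mu> n = T n"
    proof
      fix n show "pmf \<mu> n = T n"
        using e0 e1 es by (cases n; cases "n - 1") auto
    qed
  next
    assume h0: "\<forall>n. pmf \<mu> n = T n"
    have h: "pmf \<mu> n = T n" for n using h0 by simp
    show "bind_pmf \<mu> (vaoi_step \<alpha> ps pg) = \<mu>"
    proof (rule pmf_eqI)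
      fix n
      show "pmf (bind_pmf \<mu> (vaoi_step \<alpha> ps pg)) n = pmf \<mu> n"
      proof (cases n)
        case 0
        show ?thesis unfolding \<open>n = 0\<close> BE h T_def using bpos by (simp add: field_simps power2_eq_square; (unfold bq)?; algebra)
      next
        case (Suc m)
        show ?thesis
        proof (cases m)
          case 0
          have "q * pg + (1 - q) * ((1 - pg) * B + pg * (q * (1 - pg) / \<beta>)) = B"
            unfolding B_def using bpos by (simp add: field_simps power2_eq_square; (unfold bq)?; algebra)
          then show ?thesis unfolding BE h T_def using Suc 0 by simp
        next
          case (Suc k)
          have "(1 - q) * ((1 - pg) * (r ^ Suc k * B) + pg * (r ^ k * B)) = r ^ Suc k * B"
          proof -
            have "(1 - q) * ((1 - pg) * r + pg) = r" using rb unfolding bq by algebra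
            hence "(1 - q) * ((1 - pg) * r + pg) * (r ^ k * B) = r * (r ^ k * B)" by simp
            thus ?thesis by (simp add: algebra_simps)
          qed
          then show ?thesis unfolding BE h T_def using \<open>n = Suc m\<close> Suc by simp
        qed
      qed
    qed
  qed
qed

end
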